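(* Let $\mathbf p=(p_1,\dots,p_n)$ be positive integers, $c\in[0,1]$, and $P=(p_1+\cdots+p_n)/\gcd(p_1,\dots,p_n)$. Write $S_c(\mathbf p)=(s_1,s_2,\dots)$. Then $s_{mP+k}=s_k$ for all integers $m\ge1$ and $k\ge1$. Moreover, $P$ is the minimal period of $S_c(\mathbf p)$.
   Context: Stationary divisor method with cut point $c\in[0,1]$: seats are allocated one at a time. Initially each party $i$ has $a_i=0$ seats; each next seat goes to a party $i$ maximizing $p_i/(a_i+c)$, whose $a_i$ then increases by $1$. Ties are broken in favor of the smallest index; parties are indexed so that $p_1\ge\cdots\ge p_n$. For $c=0$ the convention is that $p_i/0>p_j/0$ whenever $p_i>p_j$, and $p_i/0>p_j/k$ for every $k>0$. $S_c(\mathbf p)=(s_1,s_2,\dots)$ is the infinite sequence in which $s_j$ is the index of the party receiving the $j$-th seat. *)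

theory Defs
  imports Complex_Main
begin

text \<open>Parties are indexed 1..n with populations p i. An allocation is a map
  a :: nat => nat (seats held by each party). \<open>sd_better c p a i j\<close> says that
  the quotient p_i/(a_i+c) is strictly larger than p_j/(a_j+c), with the
  convention for zero denominators (c = 0) from the paper: p_i/0 > p_j/0 iff
  p_i > p_j, and p_i/0 > p_j/k for all k > 0.  For positive p this is cross
  multiplication unless both denominators vanish.\<close>

definition sd_better :: "real \<Rightarrow> (nat \<Rightarrow> nat) \<Rightarrow> (nat \<Rightarrow> nat) \<Rightarrow> nat \<Rightarrow> nat \<Rightarrow> bool" where
  "sd_better c p a i j \<longleftrightarrow>
     (if real (a i) + c = 0 \<and> real (a j) + c = 0 then p i > p j
      else real (p i) * (real (a j) + c) > real (p j) * (real (a i) + c))"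

definition sd_winner :: "real \<Rightarrow> (nat \<Rightarrow> nat) \<Rightarrow> nat \<Rightarrow> (nat \<Rightarrow> nat) \<Rightarrow> nat" where
  "sd_winner c p n a = (LEAST i. i \<in> {1..n} \<and> (\<forall>j\<in>{1..n}. \<not> sd_better c p a j i))"

fun sd_alloc :: "real \<Rightarrow> (nat \<Rightarrow> nat) \<Rightarrow> nat \<Rightarrow> nat \<Rightarrow> (nat \<Rightarrow> nat)" where
  "sd_alloc c p n 0 = (\<lambda>_. 0)"
| "sd_alloc c p n (Suc t) =
     (let a = sd_alloc c p n t; w = sd_winner c p n a in a(w := a w + 1))"

text \<open>The sequence S_c(p) = (s_1, s_2, ...): s_j is the party receiving the
  j-th seat (meaningful for j >= 1).\<close>
definition sd_seq :: "real \<Rightarrow> (nat \<Rightarrow> nat) \<Rightarrow> nat \<Rightarrow> nat \<Rightarrow> nat" where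
  "sd_seq c p n j = sd_winner c p n (sd_alloc c p n (j - 1))"

end

theory Submission imports Defs begin

definition keyf :: "real \<Rightarrow> (nat\<Rightarrow>nat) \<Rightarrow> nat \<Rightarrow> (nat\<Rightarrow>nat) \<Rightarrow> nat \<Rightarrow> real" where
 "keyf c p n a i = (if real (a i) + c = 0 then real (sum p {1..n}) + real (p i)
    else real (p i) / (real (a i) + c))"

context
  fixes c :: real and p :: "nat \<Rightarrow> nat" and n :: nat
  assumes n1: "n \<ge> 1" and ppos: "\<forall>i\<in>{1..n}. p i > 0" and c0: "0 \<le> c" and c1: "c \<le> 1"
begin

lemma key_mono:
  assumes i: "i \<in> {1..n}" and j: "j \<in> {1..n}" and b: "sd_better c p a j i"
  shows "keyf c p n a i < keyf c p n a j"
proof -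
  have pi: "real (p i) \<le> real (sum p {1..n})"
    using i by (simp only: of_nat_le_iff) (rule member_le_sum, auto)
  have pj: "real (p j) > 0" using ppos j by auto
  have pi0: "real (p i) > 0" using ppos i by auto
  show ?thesis
  proof (cases "real (a i) + c = 0")
    case Zi: True
    show ?thesis
    proof (cases "real (a j) + c = 0")
      case True
      then show ?thesis using Zi b by (simp add: keyf_def sd_better_def)
    next
      case False
      have "real (a j) + c > 0" using False c0 by linarith
      then have "real (p i) * (real (a j) + c) \<ge> 0" by simp
      then show ?thesis using Zi False b by (simp add: sd_better_def)
    qed
  next
    case Zi: False
    have di: "real (a i) + c > 0" using Zi c0 by linarith
    show ?thesis
    proof (cases "real (a j) + c = 0")
      case Zj: True
      then have "c = 0" "a j = 0" using c0 by linarith+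
      then have "a i \<ge> 1" using Zi by simp
      then have "real (p i) / (real (a i) + c) \<le> real (p i)"
        using \<open>c = 0\<close> pi0 by (simp add: divide_le_eq)
      then show ?thesis using Zi Zj pi pj by (simp add: keyf_def)
    next
      case Zj: False
      have dj: "real (a j) + c > 0" using Zj c0 by linarith
      have "real (p j) * (real (a i) + c) > real (p i) * (real (a j) + c)"
        using b Zi Zj by (simp add: sd_better_def)
      then show ?thesis using Zi Zj di dj by (simp add: keyf_def field_simps)
    qed
  qed
qed

lemma winner_ok:
  "sd_winner c p n a \<in> {1..n} \<and> (\<forall>j\<in>{1..n}. \<not> sd_better c p a j (sd_winner c p n a))"
proof -
  let ?k = "keyf c p n a"
  have fin: "finite (?k ` {1..n})" and ne: "?k ` {1..n} \<noteq> {}" using n1 by auto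
  obtain i where i: "i \<in> {1..n}" "?k i = Max (?k ` {1..n})"
    using Max_in[OF fin ne] by auto
  have "\<forall>j\<in>{1..n}. \<not> sd_better c p a j i"
  proof
    fix j assume j: "j \<in> {1..n}"
    show "\<not> sd_better c p a j i"
    proof
      assume "sd_better c p a j i"
      then have "?k i < ?k j" using key_mono i j by blast
      moreover have "?k j \<le> Max (?k ` {1..n})" using fin j by simp
      ultimately show False using i by simp
    qed
  qed
  then have "i \<in> {1..n} \<and> (\<forall>j\<in>{1..n}. \<not> sd_better c p a j i)" using i by simp
  then show ?thesis unfolding sd_winner_def by (rule LeastI)
qed

lemma alloc_out: "i \<notin> {1..n} \<Longrightarrow> sd_alloc c p n t i = 0"
proof (induction t)
  case 0 then show ?case by simp
next
  case (Suc t)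
  have "sd_winner c p n (sd_alloc c p n t) \<in> {1..n}" using winner_ok by blast
  then show ?case using Suc by (auto simp: Let_def)
qed

lemma alloc_sum: "(\<Sum>i=1..n. sd_alloc c p n t i) = t"
proof (induction t)
  case 0 then show ?case by simp
next
  case (Suc t)
  define a where "a = sd_alloc c p n t"
  define w where "w = sd_winner c p n a"
  have w: "w \<in> {1..n}" using winner_ok w_def by blast
  have "(\<Sum>i=1..n. (a(w := a w + 1)) i) = (\<Sum>i=1..n. a i) + 1"
  proof -
    have "(\<Sum>i=1..n. (a(w := a w + 1)) i) = (\<Sum>i=1..n. a i + (if i = w then 1 else 0))"
      by (rule sum.cong) auto
    also have "\<dots> = (\<Sum>i=1..n. a i) + 1" using w by (simp add: sum.distrib)
    finally show ?thesis .
  qed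
  then show ?case using Suc by (simp add: a_def w_def Let_def)
qed


abbreviation "G \<equiv> Gcd (p ` {1..n})"

lemma G_pos: "G > 0"
proof -
  have "1 \<in> {1..n}" using n1 by simp
  then have "G dvd p 1" by (simp add: Gcd_dvd)
  moreover have "p 1 > 0" using ppos n1 by auto
  ultimately show ?thesis by (metis dvd_0_left_iff gr0I less_irrefl)
qed

lemma p_eq: "i \<in> {1..n} \<Longrightarrow> p i = G * (p i div G)"
  by (simp add: Gcd_dvd)

lemma q_pos: assumes "i \<in> {1..n}" shows "p i div G \<ge> 1"
proof (rule ccontr)
  assume "\<not> p i div G \<ge> 1"
  then have "p i div G = 0" by simp
  then have "p i = 0" using p_eq[OF assms] by simp
  then show False using ppos assms by fastforce
qed

lemma P_eq: "(\<Sum>i=1..n. p i) div G = (\<Sum>i=1..n. p i div G)"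
proof -
  have "(\<Sum>i=1..n. p i) = G * (\<Sum>i=1..n. p i div G)"
    unfolding sum_distrib_left by (rule sum.cong) (auto simp: p_eq[symmetric])
  then show ?thesis using G_pos by simp
qed

lemma better_lemma:
  assumes j: "j \<in> {1..n}" and w: "w \<in> {1..n}"
    and aj: "a j < p j div G" and aw: "a w \<ge> p w div G"
  shows "sd_better c p a j w"
proof -
  define qj where "qj = real (p j div G)"
  define qw where "qw = real (p w div G)"
  have qj1: "qj \<ge> 1" and qw1: "qw \<ge> 1" using q_pos j w qj_def qw_def by auto
  have ajr: "real (a j) + 1 \<le> qj" using aj qj_def by linarith
  have awr: "real (a w) \<ge> qw" using aw qw_def by simp
  have "qj * (real (a w) + c) \<ge> qj * (qw + c)" using awr qj1 by (intro mult_left_mono) auto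
  moreover have "qw * (real (a j) + c) \<le> qw * (qj - 1 + c)" using ajr qw1 by (intro mult_left_mono) auto
  moreover have "qj * (qw + c) - qw * (qj - 1 + c) = qj * c + qw * (1 - c)" by (simp add: algebra_simps)
  moreover have "qj * c + qw * (1 - c) > 0"
  proof (cases "c > 0")
    case True
    then have "qj * c > 0" using qj1 by simp
    moreover have "qw * (1 - c) \<ge> 0" using qw1 c1 by simp
    ultimately show ?thesis by linarith
  next
    case False
    then show ?thesis using qw1 c0 by simp
  qed
  ultimately have key: "qj * (real (a w) + c) > qw * (real (a j) + c)" by linarith
  have Gr: "real G > 0" using G_pos by simp
  have "real (p j) = real G * qj" "real (p w) = real G * qw"
    using p_eq[OF j] p_eq[OF w] qj_def qw_def by (metis of_nat_mult)+
  then have "real (p j) * (real (a w) + c) > real (p w) * (real (a j) + c)"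
    using key Gr by (simp add: mult.assoc)
  moreover have "real (a w) + c \<noteq> 0" using awr qw1 c0 by linarith
  ultimately show ?thesis by (simp add: sd_better_def)
qed

lemma inv: "t \<le> (\<Sum>i=1..n. p i div G) \<Longrightarrow> \<forall>i\<in>{1..n}. sd_alloc c p n t i \<le> p i div G"
proof (induction t)
  case 0 then show ?case by simp
next
  case (Suc t)
  define a where "a = sd_alloc c p n t"
  define w where "w = sd_winner c p n a"
  have w: "w \<in> {1..n}" and wmax: "\<forall>j\<in>{1..n}. \<not> sd_better c p a j w"
    using winner_ok w_def by blast+
  have IH: "\<forall>i\<in>{1..n}. a i \<le> p i div G" using Suc a_def by simp
  have "(\<Sum>i=1..n. a i) < (\<Sum>i=1..n. p i div G)" using alloc_sum[of t] Suc a_def by simp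
  then obtain j where j: "j \<in> {1..n}" "a j < p j div G"
    by (meson not_less sum_mono)
  have "a w < p w div G"
  proof (rule ccontr)
    assume "\<not> a w < p w div G"
    then have "sd_better c p a j w" using better_lemma j w by simp
    then show False using wmax j by blast
  qed
  then show ?case using IH by (simp add: a_def[symmetric] w_def[symmetric] Let_def)
qed

lemma alloc_P: "i \<in> {1..n} \<Longrightarrow> sd_alloc c p n (\<Sum>i=1..n. p i div G) i = p i div G"
proof (rule ccontr)
  let ?T = "\<Sum>i=1..n. p i div G"
  assume i: "i \<in> {1..n}" and ne: "sd_alloc c p n ?T i \<noteq> p i div G"
  have le: "\<forall>i\<in>{1..n}. sd_alloc c p n ?T i \<le> p i div G" using inv by simp
  then have "sd_alloc c p n ?T i < p i div G" using i ne by force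
  then have "(\<Sum>i=1..n. sd_alloc c p n ?T i) < ?T"
    using le i by (intro sum_strict_mono_ex1) auto
  then show False using alloc_sum by simp
qed

lemma better_nz: "\<not> (real (b i) + c = 0 \<and> real (b j) + c = 0) \<Longrightarrow>
  sd_better c p b i j \<longleftrightarrow> real (p j) * (real (b i) + c) < real (p i) * (real (b j) + c)"
  unfolding sd_better_def by auto

definition "qq i = (if i \<in> {1..n} then p i div G else 0)"

lemma better_b:
  assumes i: "i \<in> {1..n}" and j: "j \<in> {1..n}"
  shows "sd_better c p (\<lambda>k. qq k + a k) i j \<longleftrightarrow>
     real (p i div G) * (real (a j) + c) > real (p j div G) * (real (a i) + c)"
proof -
  define qi where "qi = real (p i div G)"
  define qj where "qj = real (p j div G)"
  have Gr: "real G > 0" using G_pos by simp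
  have pi: "real (p i) = real G * qi" and pj: "real (p j) = real G * qj"
    using p_eq[OF i] p_eq[OF j] qi_def qj_def by (metis of_nat_mult)+
  have qi1: "qi \<ge> 1" using q_pos[OF i] qi_def by simp
  have bi: "real (qq i + a i) = qi + real (a i)" using i qi_def qq_def by simp
  have bj: "real (qq j + a j) = qj + real (a j)" using j qj_def qq_def by simp
  have nz: "real (qq i + a i) + c \<noteq> 0" using bi qi1 c0 by simp
  define b where "b = (\<lambda>k. qq k + a k)"
  have nz2: "\<not> (real (b i) + c = 0 \<and> real (b j) + c = 0)" using nz b_def by simp
  have "sd_better c p (\<lambda>k. qq k + a k) i j \<longleftrightarrow>
     real G * qi * (qj + real (a j) + c) > real G * qj * (qi + real (a i) + c)"
  proof -
    have "sd_better c p (\<lambda>k. qq k + a k) i j \<longleftrightarrow>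
      real (p j) * (real (qq i + a i) + c) < real (p i) * (real (qq j + a j) + c)"
      using better_nz[of b i j] nz2 unfolding b_def by simp
    then show ?thesis unfolding pi pj bi bj by (simp add: add.assoc)
  qed
  also have "\<dots> \<longleftrightarrow> real G * (qi * (real (a j) + c)) > real G * (qj * (real (a i) + c))"
    by (simp add: algebra_simps)
  also have "\<dots> \<longleftrightarrow> qi * (real (a j) + c) > qj * (real (a i) + c)"
    using Gr by simp
  finally show ?thesis using qi_def qj_def by simp
qed

lemma better_a:
  assumes i: "i \<in> {1..n}" and j: "j \<in> {1..n}" and nz: "\<not> (real (a i) + c = 0 \<and> real (a j) + c = 0)"
  shows "sd_better c p a i j \<longleftrightarrow>
     real (p i div G) * (real (a j) + c) > real (p j div G) * (real (a i) + c)"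
proof -
  define qi where "qi = real (p i div G)"
  define qj where "qj = real (p j div G)"
  have Gr: "real G > 0" using G_pos by simp
  have pi: "real (p i) = real G * qi" and pj: "real (p j) = real G * qj"
    using p_eq[OF i] p_eq[OF j] qi_def qj_def by (metis of_nat_mult)+
  have "sd_better c p a i j \<longleftrightarrow>
     real G * (qi * (real (a j) + c)) > real G * (qj * (real (a i) + c))"
    unfolding sd_better_def if_not_P[OF nz] pi pj by (simp add: mult.assoc)
  also have "\<dots> \<longleftrightarrow> qi * (real (a j) + c) > qj * (real (a i) + c)"
    using Gr by simp
  finally show ?thesis using qi_def qj_def by simp
qed

lemma winner_shift:
  assumes sorted: "\<forall>i\<in>{1..n}. \<forall>j\<in>{1..n}. i \<le> j \<longrightarrow> p i \<ge> p j"
  shows "sd_winner c p n (\<lambda>k. qq k + a k) = sd_winner c p n a"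
proof (cases "c = 0 \<and> (\<exists>i\<in>{1..n}. a i = 0)")
  case False
  have "\<forall>i\<in>{1..n}. \<forall>j\<in>{1..n}. sd_better c p (\<lambda>k. qq k + a k) i j = sd_better c p a i j"
  proof (intro ballI)
    fix i j assume i: "i \<in> {1..n}" and j: "j \<in> {1..n}"
    have "\<not> (real (a i) + c = 0 \<and> real (a j) + c = 0)"
    proof
      assume "real (a i) + c = 0 \<and> real (a j) + c = 0"
      then have "c = 0" "a i = 0" using c0 by linarith+
      then show False using False i by blast
    qed
    then show "sd_better c p (\<lambda>k. qq k + a k) i j = sd_better c p a i j"
      using better_a[OF i j] better_b[OF i j] by simp
  qed
  note all = this
  have eq: "\<And>i. (i \<in> {1..n} \<and> (\<forall>j\<in>{1..n}. \<not> sd_better c p (\<lambda>k. qq k + a k) j i))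
     = (i \<in> {1..n} \<and> (\<forall>j\<in>{1..n}. \<not> sd_better c p a j i))"
  proof -
    fix i show "?thesis i"
    proof (cases "i \<in> {1..n}")
      case True
      then show ?thesis using all by simp
    qed auto
  qed
  show ?thesis unfolding sd_winner_def eq ..
next
  case True
  then have c: "c = 0" by simp
  define i0 where "i0 = (LEAST i. i \<in> {1..n} \<and> a i = 0)"
  have ex: "\<exists>i. i \<in> {1..n} \<and> a i = 0" using True by blast
  have "i0 \<in> {1..n} \<and> a i0 = 0" unfolding i0_def by (rule LeastI_ex[OF ex])
  then have i0: "i0 \<in> {1..n}" "a i0 = 0" by auto
  have below: "y \<in> {1..n} \<Longrightarrow> y < i0 \<Longrightarrow> a y \<noteq> 0" for y
  proof -
    assume "y < i0"
    then have "\<not> (y \<in> {1..n} \<and> a y = 0)" unfolding i0_def by (rule not_less_Least)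
    moreover assume "y \<in> {1..n}"
    ultimately show "a y \<noteq> 0" by auto
  qed
  have above: "j \<in> {1..n} \<Longrightarrow> a j = 0 \<Longrightarrow> i0 \<le> j" for j
    unfolding i0_def by (rule Least_le) simp
  have pos: "k \<in> {1..n} \<Longrightarrow> real (p k div G) > 0" for k using q_pos by fastforce
  have wa: "sd_winner c p n a = i0" unfolding sd_winner_def
  proof (rule Least_equality)
    show "i0 \<in> {1..n} \<and> (\<forall>j\<in>{1..n}. \<not> sd_better c p a j i0)"
    proof (intro conjI ballI i0)
      fix j assume j: "j \<in> {1..n}"
      show "\<not> sd_better c p a j i0"
      proof (cases "a j = 0")
        case True
        then have "i0 \<le> j" using above[OF j] by simp
        then have "p j \<le> p i0" using sorted j i0(1) by blast
        then show ?thesis using True i0 c by (simp add: sd_better_def)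
      next
        case False
        have "real (p i0) * real (a j) \<ge> 0" by simp
        then show ?thesis using False i0 c by (simp add: sd_better_def mult_less_0_iff)
      qed
    qed
  next
    fix y assume y: "y \<in> {1..n} \<and> (\<forall>j\<in>{1..n}. \<not> sd_better c p a j y)"
    show "i0 \<le> y"
    proof (rule ccontr)
      assume "\<not> i0 \<le> y"
      then have ay: "a y \<noteq> 0" using below y by simp
      have "real (p i0) > 0" using ppos i0 by fastforce
      then have "sd_better c p a i0 y" using ay c i0 by (simp add: sd_better_def)
      then show False using y i0 by blast
    qed
  qed
  have wb: "sd_winner c p n (\<lambda>k. qq k + a k) = i0" unfolding sd_winner_def
  proof (rule Least_equality)
    show "i0 \<in> {1..n} \<and> (\<forall>j\<in>{1..n}. \<not> sd_better c p (\<lambda>k. qq k + a k) j i0)"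
    proof (intro conjI ballI i0)
      fix j assume j: "j \<in> {1..n}"
      have "real (p i0 div G) * real (a j) \<ge> 0" by simp
      then show "\<not> sd_better c p (\<lambda>k. qq k + a k) j i0"
        using better_b[OF j i0(1)] i0 c by (simp add: mult_less_0_iff)
    qed
  next
    fix y assume y: "y \<in> {1..n} \<and> (\<forall>j\<in>{1..n}. \<not> sd_better c p (\<lambda>k. qq k + a k) j y)"
    show "i0 \<le> y"
    proof (rule ccontr)
      assume "\<not> i0 \<le> y"
      then have ay: "a y \<noteq> 0" using below y by simp
      have "real (p i0 div G) * real (a y) > 0" using pos[OF i0(1)] ay by simp
      then have "sd_better c p (\<lambda>k. qq k + a k) i0 y" using better_b[OF i0(1) conjunct1[OF y], of a] i0 c by simp
      then show False using y i0 by blast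
    qed
  qed
  show ?thesis using wa wb by simp
qed

lemma seq_Suc: "sd_seq c p n (Suc j) = sd_winner c p n (sd_alloc c p n j)"
  by (simp add: sd_seq_def)

lemma alloc_shift:
  assumes sorted: "\<forall>i\<in>{1..n}. \<forall>j\<in>{1..n}. i \<le> j \<longrightarrow> p i \<ge> p j"
  shows "sd_alloc c p n ((\<Sum>i=1..n. p i div G) + t) = (\<lambda>k. qq k + sd_alloc c p n t k)"
proof (induction t)
  case 0
  show ?case
  proof
    fix k show "sd_alloc c p n ((\<Sum>i=1..n. p i div G) + 0) k = qq k + sd_alloc c p n 0 k"
      using alloc_P[of k] alloc_out[of k] by (simp add: qq_def)
  qed
next
  case (Suc t)
  have w: "sd_winner c p n (\<lambda>k. qq k + sd_alloc c p n t k) = sd_winner c p n (sd_alloc c p n t)"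
    by (rule winner_shift[OF sorted])
  let ?T = "\<Sum>i=1..n. p i div G"
  have "sd_alloc c p n (?T + Suc t) = (let a = sd_alloc c p n (?T + t); w = sd_winner c p n a in a(w := a w + 1))"
    by simp
  also have "\<dots> = (let a = (\<lambda>k. qq k + sd_alloc c p n t k); w = sd_winner c p n a in a(w := a w + 1))"
    by (simp only: Suc)
  also have "\<dots> = (\<lambda>k. qq k + sd_alloc c p n (Suc t) k)"
    unfolding Let_def w by (auto simp: fun_eq_iff Let_def)
  finally show ?case .
qed

lemma seq_period:
  assumes sorted: "\<forall>i\<in>{1..n}. \<forall>j\<in>{1..n}. i \<le> j \<longrightarrow> p i \<ge> p j" and k: "k \<ge> 1"
  shows "sd_seq c p n ((\<Sum>i=1..n. p i div G) + k) = sd_seq c p n k"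
proof -
  obtain j where j: "k = Suc j" using k by (cases k) auto
  have "sd_seq c p n ((\<Sum>i=1..n. p i div G) + k) = sd_winner c p n (sd_alloc c p n ((\<Sum>i=1..n. p i div G) + j))"
    using j seq_Suc by simp
  also have "\<dots> = sd_winner c p n (sd_alloc c p n j)"
    using alloc_shift[OF sorted] winner_shift[OF sorted] by simp
  finally show ?thesis using j seq_Suc by simp
qed

lemma seq_period_m:
  assumes sorted: "\<forall>i\<in>{1..n}. \<forall>j\<in>{1..n}. i \<le> j \<longrightarrow> p i \<ge> p j" and k: "k \<ge> 1"
  shows "sd_seq c p n (m * (\<Sum>i=1..n. p i div G) + k) = sd_seq c p n k"
proof (induction m)
  case 0 then show ?case by simp
next
  case (Suc m)
  have "Suc m * (\<Sum>i=1..n. p i div G) + k = (\<Sum>i=1..n. p i div G) + (m * (\<Sum>i=1..n. p i div G) + k)"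
    by simp
  then show ?case using seq_period[OF sorted, of "m * (\<Sum>i=1..n. p i div G) + k"] k Suc by (simp add: add.assoc)
qed

lemma alloc_add:
  assumes per: "\<forall>k\<ge>1. sd_seq c p n (Q + k) = sd_seq c p n k"
  shows "sd_alloc c p n (Q + t) i = sd_alloc c p n Q i + sd_alloc c p n t i"
proof (induction t arbitrary: i)
  case 0 then show ?case by simp
next
  case (Suc t)
  have "sd_winner c p n (sd_alloc c p n (Q + t)) = sd_winner c p n (sd_alloc c p n t)"
    using per[rule_format, of "Suc t"] seq_Suc[of "Q + t"] seq_Suc[of t] by simp
  then show ?case using Suc by (simp add: Let_def)
qed

lemma alloc_mult:
  assumes per: "\<forall>k\<ge>1. sd_seq c p n (Q + k) = sd_seq c p n k"
  shows "sd_alloc c p n (m * Q) i = m * sd_alloc c p n Q i"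
proof (induction m)
  case 0 then show ?case by simp
next
  case (Suc m)
  have "sd_alloc c p n (Suc m * Q) i = sd_alloc c p n (Q + m * Q) i" by simp
  also have "\<dots> = sd_alloc c p n Q i + sd_alloc c p n (m * Q) i" by (rule alloc_add[OF per])
  finally show ?case using Suc by simp
qed

lemma minimal:
  assumes sorted: "\<forall>i\<in>{1..n}. \<forall>j\<in>{1..n}. i \<le> j \<longrightarrow> p i \<ge> p j"
    and Q: "Q \<ge> 1" and per: "\<forall>k\<ge>1. sd_seq c p n (Q + k) = sd_seq c p n k"
  shows "(\<Sum>i=1..n. p i div G) \<le> Q"
proof -
  define T where "T = (\<Sum>i=1..n. p i div G)"
  have perT: "\<forall>k\<ge>1. sd_seq c p n (T + k) = sd_seq c p n k"
    using seq_period[OF sorted] T_def by simp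
  have dv: "T * G dvd Q * p i" if i: "i \<in> {1..n}" for i
  proof -
    have "sd_alloc c p n (Q * T) i = Q * sd_alloc c p n T i" by (rule alloc_mult[OF perT])
    also have "\<dots> = Q * (p i div G)" using alloc_P[OF i] T_def by simp
    finally have 1: "sd_alloc c p n (Q * T) i = Q * (p i div G)" .
    have "sd_alloc c p n (T * Q) i = T * sd_alloc c p n Q i" by (rule alloc_mult[OF per])
    then have "T * sd_alloc c p n Q i = Q * (p i div G)" using 1 by (simp add: mult.commute)
    then have "T * G * sd_alloc c p n Q i = G * (Q * (p i div G))" by (simp add: ac_simps)
    also have "\<dots> = Q * (G * (p i div G))" by (simp add: ac_simps)
    also have "\<dots> = Q * p i" using p_eq[OF i] by simp
    finally have "T * G * sd_alloc c p n Q i = Q * p i" .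
    then show ?thesis by (metis dvd_triv_left)
  qed
  have "T * G dvd Gcd ((*) Q ` (p ` {1..n}))"
  proof (rule Gcd_greatest)
    fix b assume "b \<in> (*) Q ` (p ` {1..n})"
    then obtain i where "i \<in> {1..n}" "b = Q * p i" by blast
    then show "T * G dvd b" using dv by blast
  qed
  also have "Gcd ((*) Q ` (p ` {1..n})) = Q * G" by (simp add: Gcd_mult)
  finally have "T * G dvd Q * G" .
  then obtain k where "Q * G = T * G * k" by (elim dvdE)
  then have "Q * G = (T * k) * G" by (simp add: ac_simps)
  then have "Q = T * k" using G_pos by (metis mult_right_cancel neq0_conv)
  then have "T dvd Q" by simp
  then show ?thesis using Q T_def by (simp add: dvd_imp_le)
qed

lemma P_pos: "(\<Sum>i=1..n. p i div G) \<ge> 1"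
proof -
  have "p 1 div G \<le> (\<Sum>i=1..n. p i div G)" using n1 by (intro member_le_sum) auto
  moreover have "p 1 div G \<ge> 1" using q_pos n1 by simp
  ultimately show ?thesis by simp
qed

end

theorem mainTheorem4:
  fixes p :: "nat \<Rightarrow> nat" and n :: nat and c :: real
  assumes "n \<ge> 1"
    and "\<forall>i\<in>{1..n}. p i > 0"
    and "\<forall>i\<in>{1..n}. \<forall>j\<in>{1..n}. i \<le> j \<longrightarrow> p i \<ge> p j"
    and "0 \<le> c" and "c \<le> 1"
  defines "P \<equiv> (\<Sum>i=1..n. p i) div Gcd (p ` {1..n})"
  shows "(\<forall>m\<ge>1. \<forall>k\<ge>1. sd_seq c p n (m * P + k) = sd_seq c p n k)
    \<and> P \<ge> 1
    \<and> (\<forall>Q\<ge>1. (\<forall>k\<ge>1. sd_seq c p n (Q + k) = sd_seq c p n k) \<longrightarrow> P \<le> Q)"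
proof -
  have PE: "P = (\<Sum>i=1..n. p i div Gcd (p ` {1..n}))"
    unfolding P_def using P_eq[OF assms(1,2,4,5)] .
  show ?thesis unfolding PE
    using seq_period_m[OF assms(1,2,4,5,3)] P_pos[OF assms(1,2,4,5)] minimal[OF assms(1,2,4,5,3)]
    by blast
qed

end
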